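(* Let $\omega(n)\to+\infty$. If $p=p(n)$ satisfies \[2\frac{\log(n)+\omega(n)}{n}\le p\le 1-\frac{\log(n)+\log(\log(n))+\omega(n)}{n},\] then the probability that $\Gamma\in G(n,p)$ has a non-adjacent domination pair tends to $0$ as $n\to\infty$.
   Context: $G(n,p)$ is the Erdős–Rényi random graph on $n$ vertices with each edge present independently with probability $p$; $\log$ is the natural logarithm. For distinct vertices $a,b$, $a$ dominates $b$ if every vertex adjacent to $b$ is adjacent to or equal to $a$; the pair is non-adjacent if $a$ and $b$ are not adjacent. *)

theory Defs
  imports Complex_Main
begin

definition all_pairs :: "nat \<Rightarrow> nat set set" where
  "all_pairs n = {e. \<exists>a b. a < n \<and> b < n \<and> a \<noteq> b \<and> e = {a, b}}"

definition adj :: "nat set set \<Rightarrow> nat \<Rightarrow> nat \<Rightarrow> bool" where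
  "adj E a b \<longleftrightarrow> {a, b} \<in> E \<and> a \<noteq> b"

definition dominates :: "nat \<Rightarrow> nat set set \<Rightarrow> nat \<Rightarrow> nat \<Rightarrow> bool" where
  "dominates n E a b \<longleftrightarrow> a \<noteq> b \<and>
     (\<forall>v<n. adj E b v \<longrightarrow> (adj E a v \<or> v = a))"

definition has_nonadj_dom_pair :: "nat \<Rightarrow> nat set set \<Rightarrow> bool" where
  "has_nonadj_dom_pair n E \<longleftrightarrow>
     (\<exists>a<n. \<exists>b<n. a \<noteq> b \<and> \<not> adj E a b \<and> dominates n E a b)"

definition gnp_prob :: "nat \<Rightarrow> real \<Rightarrow> (nat set set \<Rightarrow> bool) \<Rightarrow> real" where
  "gnp_prob n p P = (\<Sum>E\<in>{E. E \<subseteq> all_pairs n \<and> P E}.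
      p ^ card E * (1 - p) ^ (card (all_pairs n) - card E))"

end

theory Submission
  imports Defs "HOL-Real_Asymp.Real_Asymp"
begin


lemma split2:
  fixes f g :: "'a set \<Rightarrow> real"
  assumes "finite A" "finite B" "A \<inter> B = {}"
  shows "(\<Sum>E\<in>Pow (A \<union> B). f (E \<inter> A) * g (E \<inter> B)) = (\<Sum>F\<in>Pow A. f F) * (\<Sum>G\<in>Pow B. g G)"
proof -
  let ?k = "\<lambda>(F, G). F \<union> G"
  have img: "Pow (A \<union> B) = ?k ` (Pow A \<times> Pow B)"
  proof
    show "Pow (A \<union> B) \<subseteq> ?k ` (Pow A \<times> Pow B)"
    proof
      fix E assume "E \<in> Pow (A \<union> B)"
      then have "E = ?k (E \<inter> A, E \<inter> B)" "(E \<inter> A, E \<inter> B) \<in> Pow A \<times> Pow B" by auto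
      then show "E \<in> ?k ` (Pow A \<times> Pow B)" by blast
    qed
  qed auto
  have inj: "inj_on ?k (Pow A \<times> Pow B)"
  proof (rule inj_onI, clarsimp)
    fix F G F' G' assume "F \<subseteq> A" "G \<subseteq> B" "F' \<subseteq> A" "G' \<subseteq> B" "F \<union> G = F' \<union> G'"
    then show "F = F' \<and> G = G'" using assms(3) by blast
  qed
  have "(\<Sum>E\<in>Pow (A \<union> B). f (E \<inter> A) * g (E \<inter> B))
      = (\<Sum>x\<in>Pow A \<times> Pow B. f (?k x \<inter> A) * g (?k x \<inter> B))"
    unfolding img by (subst sum.reindex[OF inj]) (simp add: case_prod_beta)
  also have "\<dots> = (\<Sum>x\<in>Pow A \<times> Pow B. f (fst x) * g (snd x))"
  proof (rule sum.cong)
    fix x assume "x \<in> Pow A \<times> Pow B"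
    then have "?k x \<inter> A = fst x" "?k x \<inter> B = snd x" using assms(3) by (auto simp: case_prod_beta)
    then show "f (?k x \<inter> A) * g (?k x \<inter> B) = f (fst x) * g (snd x)" by simp
  qed simp
  also have "\<dots> = (\<Sum>F\<in>Pow A. \<Sum>G\<in>Pow B. f F * g G)"
    by (subst sum.cartesian_product) (simp add: case_prod_beta)
  also have "\<dots> = (\<Sum>F\<in>Pow A. f F) * (\<Sum>G\<in>Pow B. g G)"
    by (simp add: sum_product)
  finally show ?thesis .
qed

lemma blocks:
  fixes H :: "'i \<Rightarrow> 'a set \<Rightarrow> real"
  assumes "finite I" "\<And>i. i \<in> I \<Longrightarrow> finite (B i)" "\<And>i j. i \<in> I \<Longrightarrow> j \<in> I \<Longrightarrow> i \<noteq> j \<Longrightarrow> B i \<inter> B j = {}"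
  shows "(\<Sum>E\<in>Pow (\<Union>i\<in>I. B i). \<Prod>i\<in>I. H i (E \<inter> B i)) = (\<Prod>i\<in>I. \<Sum>F\<in>Pow (B i). H i F)"
  using assms
proof (induction I rule: finite_induct)
  case empty
  then show ?case by simp
next
  case (insert j I)
  let ?U = "\<Union>i\<in>I. B i"
  have fU: "finite ?U" using insert by auto
  have fj: "finite (B j)" using insert by auto
  have dj: "B j \<inter> ?U = {}" using insert.prems(2) insert.hyps(2) by fastforce
  have dI: "\<And>i k. i \<in> I \<Longrightarrow> k \<in> I \<Longrightarrow> i \<noteq> k \<Longrightarrow> B i \<inter> B k = {}" using insert.prems(2) by auto
  have "(\<Sum>E\<in>Pow (\<Union>i\<in>insert j I. B i). \<Prod>i\<in>insert j I. H i (E \<inter> B i))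
      = (\<Sum>E\<in>Pow (B j \<union> ?U). H j (E \<inter> B j) * (\<lambda>G. \<Prod>i\<in>I. H i (G \<inter> B i)) (E \<inter> ?U))"
  proof (rule sum.cong)
    fix E assume "E \<in> Pow (B j \<union> ?U)"
    have "\<And>i. i \<in> I \<Longrightarrow> E \<inter> ?U \<inter> B i = E \<inter> B i" by auto
    then have "(\<Prod>i\<in>I. H i (E \<inter> ?U \<inter> B i)) = (\<Prod>i\<in>I. H i (E \<inter> B i))" by (intro prod.cong) auto
    then show "(\<Prod>i\<in>insert j I. H i (E \<inter> B i)) = H j (E \<inter> B j) * (\<lambda>G. \<Prod>i\<in>I. H i (G \<inter> B i)) (E \<inter> ?U)"
      using insert.hyps by simp
  qed simp
  also have "\<dots> = (\<Sum>F\<in>Pow (B j). H j F) * (\<Sum>G\<in>Pow ?U. \<Prod>i\<in>I. H i (G \<inter> B i))"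
    by (rule split2[OF fj fU dj, of "H j" "\<lambda>G. \<Prod>i\<in>I. H i (G \<inter> B i)"])
  also have "\<dots> = (\<Sum>F\<in>Pow (B j). H j F) * (\<Prod>i\<in>I. \<Sum>F\<in>Pow (B i). H i F)"
    using insert.IH insert.prems(1) dI by simp
  also have "\<dots> = (\<Prod>i\<in>insert j I. \<Sum>F\<in>Pow (B i). H i F)" using insert.hyps by simp
  finally show ?case .
qed

definition wprod :: "'a set \<Rightarrow> real \<Rightarrow> 'a set \<Rightarrow> real" where
  "wprod R p F = (\<Prod>e\<in>R. if e \<in> F then p else 1 - p)"

lemma wprod_total: "finite R \<Longrightarrow> (\<Sum>F\<in>Pow R. wprod R p F) = 1"
proof -
  assume fR: "finite R"
  have "(\<Prod>x\<in>R. p + (1 - p)) = (\<Sum>X\<in>Pow R. (\<Prod>x\<in>X. p) * (\<Prod>x\<in>R-X. 1 - p))"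
    by (rule prod_add[OF fR])
  also have "\<dots> = (\<Sum>F\<in>Pow R. wprod R p F)"
  proof (rule sum.cong)
    fix F assume "F \<in> Pow R"
    then have "R \<inter> {x. x \<in> F} = F" "R \<inter> - {x. x \<in> F} = R - F" by auto
    then show "(\<Prod>x\<in>F. p) * (\<Prod>x\<in>R-F. 1 - p) = wprod R p F"
      unfolding wprod_def using prod.If_cases[OF fR, of "\<lambda>e. e \<in> F" "\<lambda>_. p" "\<lambda>_. 1 - p"] by simp
  qed simp
  finally show ?thesis by simp
qed

lemma wprod_card:
  assumes "finite R" "F \<subseteq> R"
  shows "wprod R p F = p ^ card F * (1 - p) ^ (card R - card F)"
proof -
  have "R \<inter> {x. x \<in> F} = F" "R \<inter> - {x. x \<in> F} = R - F" using assms by auto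
  then have "wprod R p F = (\<Prod>x\<in>F. p) * (\<Prod>x\<in>R-F. 1 - p)"
    unfolding wprod_def using prod.If_cases[OF assms(1), of "\<lambda>e. e \<in> F" "\<lambda>_. p" "\<lambda>_. 1 - p"] by simp
  also have "\<dots> = p ^ card F * (1 - p) ^ (card R - card F)"
    using assms by (simp add: card_Diff_subset finite_subset)
  finally show ?thesis .
qed

lemma pair_block:
  fixes x y :: 'a and p :: real
  assumes "x \<noteq> y"
  shows "(\<Sum>F\<in>Pow {x, y}. if (y \<in> F \<longrightarrow> x \<in> F) then wprod {x, y} p F else 0) = 1 - p * (1 - p)"
proof -
  have P: "Pow {x, y} = {{}, {x}, {y}, {x, y}}" by (auto simp: Pow_insert)
  have d: "{x} \<noteq> {y}" "{x} \<noteq> {x,y}" "{y} \<noteq> {x,y}" "{} \<noteq> {x}" "{} \<noteq> {y}" "{} \<noteq> {x,y}"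
    using assms by auto
  show ?thesis unfolding P using assms d
    by (simp add: wprod_def algebra_simps power2_eq_square)
qed

lemma single_block:
  fixes x :: 'a and p :: real
  shows "(\<Sum>F\<in>Pow {x}. if x \<notin> F then wprod {x} p F else 0) = 1 - p"
proof -
  have P: "Pow {x} = {{}, {x}}" by (auto simp: Pow_insert)
  show ?thesis unfolding P by (simp add: wprod_def)
qed

lemma finite_all_pairs: "finite (all_pairs n)"
proof -
  have "all_pairs n \<subseteq> (\<lambda>(a,b). {a,b}) ` ({..<n} \<times> {..<n})"
    unfolding all_pairs_def by auto
  then show ?thesis by (rule finite_subset) auto
qed

lemma pair_prob:
  fixes p :: real
  assumes ab: "a < n" "b < n" "a \<noteq> b"
  shows "gnp_prob n p (\<lambda>E. \<not> adj E a b \<and> dominates n E a b) = (1-p) * (1 - p*(1-p))^(n-2)"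
proof -
  define S where "S = all_pairs n"
  define V where "V = {v. v < n \<and> v \<noteq> a \<and> v \<noteq> b}"
  define Bk where "Bk = (\<lambda>v. if v = a then {{a,b}} else if v = b
      then S - ({{a,b}} \<union> (\<Union>u\<in>V. {{a,u},{b,u}})) else {{a,v},{b,v}})"
  define C where "C = (\<lambda>v F. if v = a then {a,b} \<notin> F else if v = b then True
      else ({b,v} \<in> F \<longrightarrow> {a,v} \<in> F))"
  define H where "H = (\<lambda>v F. if C v F then wprod (Bk v) p F else 0)"
  define X where "X = (\<lambda>E. \<not> adj E a b \<and> dominates n E a b)"
  have fS: "finite S" unfolding S_def by (rule finite_all_pairs)
  have inS: "\<And>x y. x < n \<Longrightarrow> y < n \<Longrightarrow> x \<noteq> y \<Longrightarrow> {x,y} \<in> S"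
    unfolding S_def all_pairs_def by blast
  have UB: "(\<Union>i\<in>{..<n}. Bk i) = S"
  proof
    show "(\<Union>i\<in>{..<n}. Bk i) \<subseteq> S"
      unfolding Bk_def V_def using ab inS by auto
    show "S \<subseteq> (\<Union>i\<in>{..<n}. Bk i)"
    proof
      fix e assume e: "e \<in> S"
      show "e \<in> (\<Union>i\<in>{..<n}. Bk i)"
      proof (cases "e \<in> {{a,b}} \<union> (\<Union>u\<in>V. {{a,u},{b,u}})")
        case True
        then show ?thesis unfolding Bk_def V_def using ab by auto
      next
        case False
        then have "e \<in> Bk b" unfolding Bk_def using e ab by auto
        then show ?thesis using ab by auto
      qed
    qed
  qed
  have fB: "\<And>i. finite (Bk i)" unfolding Bk_def using fS by auto
  have dB: "\<And>i j. i \<in> {..<n} \<Longrightarrow> j \<in> {..<n} \<Longrightarrow> i \<noteq> j \<Longrightarrow> Bk i \<inter> Bk j = {}"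
    unfolding Bk_def V_def using ab by (auto simp: doubleton_eq_iff)
  have step1: "gnp_prob n p X = (\<Sum>E\<in>Pow S. if X E then wprod S p E else 0)"
  proof -
    have "{E. E \<subseteq> all_pairs n \<and> X E} = {E \<in> Pow S. X E}" unfolding S_def by auto
    then have "gnp_prob n p X = (\<Sum>E\<in>{E \<in> Pow S. X E}. wprod S p E)"
      unfolding gnp_prob_def S_def using finite_all_pairs
      by (intro sum.cong) (auto simp: wprod_card)
    also have "\<dots> = (\<Sum>E\<in>Pow S. if X E then wprod S p E else 0)"
      using fS by (intro sum.inter_filter) simp
    finally show ?thesis .
  qed
  have step2: "(if X E then wprod S p E else 0) = (\<Prod>i\<in>{..<n}. H i (E \<inter> Bk i))"
    if E: "E \<in> Pow S" for E
  proof -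
    have w: "wprod S p E = (\<Prod>i\<in>{..<n}. wprod (Bk i) p (E \<inter> Bk i))"
    proof -
      have "wprod S p E = (\<Prod>i\<in>{..<n}. \<Prod>e\<in>Bk i. if e \<in> E then p else 1 - p)"
        unfolding wprod_def UB[symmetric] using fB dB by (subst prod.UNION_disjoint) auto
      then show ?thesis unfolding wprod_def by simp
    qed
    have XC: "X E \<longleftrightarrow> (\<forall>i\<in>{..<n}. C i (E \<inter> Bk i))"
    proof
      assume x: "X E"
      show "\<forall>i\<in>{..<n}. C i (E \<inter> Bk i)"
      proof
        fix i assume i: "i \<in> {..<n}"
        show "C i (E \<inter> Bk i)"
        proof (cases "i = a \<or> i = b")
          case True
          then show ?thesis using x ab unfolding C_def X_def adj_def by auto
        next
          case False
          then have "adj E b i \<longrightarrow> adj E a i \<or> i = a" using x i unfolding X_def dominates_def by auto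
          then show ?thesis using False unfolding C_def Bk_def adj_def by auto
        qed
      qed
    next
      assume c: "\<forall>i\<in>{..<n}. C i (E \<inter> Bk i)"
      have nab: "{a,b} \<notin> E" using c[rule_format, of a] ab unfolding C_def Bk_def by auto
      have "dominates n E a b" unfolding dominates_def
      proof (intro conjI allI impI)
        show "a \<noteq> b" using ab by simp
        fix v assume v: "v < n" "adj E b v"
        show "adj E a v \<or> v = a"
        proof (cases "v = a \<or> v = b")
          case True
          then show ?thesis using v nab unfolding adj_def by (auto simp: insert_commute)
        next
          case False
          then have "C v (E \<inter> Bk v)" using c v by auto
          then show ?thesis using False v unfolding C_def Bk_def adj_def by auto
        qed
      qed
      then show "X E" unfolding X_def adj_def using nab by auto
    qed
    show ?thesis
    proof (cases "X E")
      case True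
      then show ?thesis using XC w unfolding H_def by (auto intro!: prod.cong)
    next
      case False
      then obtain i where "i \<in> {..<n}" "\<not> C i (E \<inter> Bk i)" using XC by auto
      then have "H i (E \<inter> Bk i) = 0" unfolding H_def by simp
      then show ?thesis using False \<open>i \<in> {..<n}\<close> by (auto intro!: prod_zero)
    qed
  qed
  have step3: "gnp_prob n p X = (\<Prod>i\<in>{..<n}. \<Sum>F\<in>Pow (Bk i). H i F)"
  proof -
    have "gnp_prob n p X = (\<Sum>E\<in>Pow S. \<Prod>i\<in>{..<n}. H i (E \<inter> Bk i))"
      using step1 step2 by simp
    also have "\<dots> = (\<Prod>i\<in>{..<n}. \<Sum>F\<in>Pow (Bk i). H i F)"
      unfolding UB[symmetric] by (rule blocks) (use fB dB in auto)
    finally show ?thesis .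
  qed
  have va: "(\<Sum>F\<in>Pow (Bk a). H a F) = 1 - p"
    unfolding H_def C_def Bk_def using single_block[of "{a,b}" p] by simp
  have vb: "(\<Sum>F\<in>Pow (Bk b). H b F) = 1"
    unfolding H_def C_def using ab wprod_total[OF fB[of b]] by simp
  have vv: "(\<Sum>F\<in>Pow (Bk v). H v F) = 1 - p*(1-p)" if v: "v \<in> V" for v
  proof -
    have "v \<noteq> a" "v \<noteq> b" using v unfolding V_def by auto
    moreover have "{b,v} \<noteq> {a,v}" using ab by (auto simp: doubleton_eq_iff)
    ultimately show ?thesis
      unfolding H_def C_def Bk_def using pair_block[of "{a,v}" "{b,v}" p] by simp
  qed
  have I: "{..<n} = {a,b} \<union> V" unfolding V_def using ab by auto
  have cV: "card V = n - 2"
  proof -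
    have "V = {..<n} - {a,b}" unfolding V_def by auto
    then show ?thesis using ab by (simp add: card_Diff_subset)
  qed
  have "(\<Prod>i\<in>{..<n}. \<Sum>F\<in>Pow (Bk i). H i F)
      = (\<Prod>i\<in>{a,b}. \<Sum>F\<in>Pow (Bk i). H i F) * (\<Prod>i\<in>V. \<Sum>F\<in>Pow (Bk i). H i F)"
    unfolding I by (rule prod.union_disjoint) (auto simp: V_def)
  also have "\<dots> = (1-p) * (1 - p*(1-p))^(n-2)"
    using va vb vv cV ab by simp
  finally show ?thesis using step3 unfolding X_def by simp
qed

lemma gnp_sum: "gnp_prob n p P = (\<Sum>E\<in>Pow (all_pairs n). if P E then
      p ^ card E * (1 - p) ^ (card (all_pairs n) - card E) else 0)"
proof -
  have "{E. E \<subseteq> all_pairs n \<and> P E} = {E \<in> Pow (all_pairs n). P E}" by auto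
  then show ?thesis unfolding gnp_prob_def using finite_all_pairs
    by (simp only:) (intro sum.inter_filter, simp)
qed

lemma union_bound:
  fixes p :: real
  assumes p: "0 \<le> p" "p \<le> 1"
  shows "gnp_prob n p (has_nonadj_dom_pair n) \<le> real n ^ 2 * ((1-p) * (1 - p*(1-p))^(n-2))"
proof -
  define wt where "wt = (\<lambda>E::nat set set. p ^ card E * (1 - p) ^ (card (all_pairs n) - card E))"
  define X where "X = (\<lambda>a b E. \<not> adj E a b \<and> dominates n E a b)"
  define c where "c = (1-p) * (1 - p*(1-p))^(n-2)"
  have wt0: "\<And>E. wt E \<ge> 0" unfolding wt_def using p by simp
  have pq: "p*(1-p) \<le> 1" using p by (simp add: mult_le_one)
  have c0: "c \<ge> 0" unfolding c_def using p pq by simp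
  have pt: "(if has_nonadj_dom_pair n E then wt E else 0)
      \<le> (\<Sum>a<n. \<Sum>b\<in>{..<n}-{a}. if X a b E then wt E else 0)" for E
  proof (cases "has_nonadj_dom_pair n E")
    case True
    then obtain a b where abn: "a < n" "b < n" "a \<noteq> b" "X a b E"
      unfolding has_nonadj_dom_pair_def X_def by blast
    have "wt E = (if X a b E then wt E else 0)" using abn by simp
    also have "\<dots> \<le> (\<Sum>b\<in>{..<n}-{a}. if X a b E then wt E else 0)"
      using abn wt0 by (intro member_le_sum[of b]) auto
    also have "\<dots> \<le> (\<Sum>a<n. \<Sum>b\<in>{..<n}-{a}. if X a b E then wt E else 0)"
      using abn wt0 by (intro member_le_sum[where i=a] sum_nonneg) auto
    finally show ?thesis using True by simp
  next
    case False
    then show ?thesis using wt0 by (simp add: sum_nonneg)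
  qed
  have "gnp_prob n p (has_nonadj_dom_pair n) = (\<Sum>E\<in>Pow (all_pairs n). if has_nonadj_dom_pair n E then wt E else 0)"
    unfolding gnp_sum wt_def ..
  also have "\<dots> \<le> (\<Sum>E\<in>Pow (all_pairs n). \<Sum>a<n. \<Sum>b\<in>{..<n}-{a}. if X a b E then wt E else 0)"
    by (rule sum_mono) (rule pt)
  also have "\<dots> = (\<Sum>a<n. \<Sum>b\<in>{..<n}-{a}. \<Sum>E\<in>Pow (all_pairs n). if X a b E then wt E else 0)"
    by (subst sum.swap) (subst sum.swap, rule refl)
  also have "\<dots> = (\<Sum>a<n. \<Sum>b\<in>{..<n}-{a}. c)"
  proof (intro sum.cong refl)
    fix a b assume "a \<in> {..<n}" "b \<in> {..<n} - {a}"
    then have "gnp_prob n p (X a b) = c" unfolding X_def c_def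
      by (intro pair_prob) auto
    then show "(\<Sum>E\<in>Pow (all_pairs n). if X a b E then wt E else 0) = c"
      unfolding gnp_sum wt_def by simp
  qed
  also have "\<dots> \<le> (\<Sum>a<n. \<Sum>b<n. c)"
    using c0 by (intro sum_mono sum_mono2) auto
  also have "\<dots> = real n ^ 2 * c" by (simp add: power2_eq_square)
  finally show ?thesis unfolding c_def .
qed



lemma partB:
  fixes N L K w p q :: real
  assumes N4: "N \<ge> 4" and L8: "L \<ge> 8" and eL: "exp L = N" and eK: "exp K = L"
    and K0: "0 \<le> K" and KL: "K \<le> L" and w0: "0 \<le> w" and wL: "w \<le> L"
    and s1: "(8*L+16*L^2)/N \<le> 1" and s2: "(6*L+9*L^2)/N \<le> 1" and s3: "12*L \<le> N"
    and p0: "0 \<le> p" and p1: "p \<le> 1" and qdef: "q = 1 - p"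
    and lo: "2*(L+w)/N \<le> p" and hi: "(L+K+w)/N \<le> q"
  shows "N^2 * q * exp (-((N-2)*p*q)) \<le> 3 * exp 1 * exp (-w)"
proof -
  have Npos: "N > 0" using N4 by simp
  have Lpos: "L > 0" using L8 by simp
  have eN2: "N^2 * exp (-2*L) = 1"
  proof -
    have "exp (-2*L) * (exp L * exp L) = exp (-2*L + (L + L))" by (simp only: exp_add)
    also have "\<dots> = 1" by simp
    finally show ?thesis using eL by (simp add: power2_eq_square algebra_simps)
  qed
  show ?thesis
  proof (cases "p \<le> 1/2")
    case True
    define p0 where "p0 = 2*(L+w)/N"
    have p0le: "p0 \<le> 4*L/N" unfolding p0_def using wL Npos by (simp add: divide_right_mono)
    have p0le3: "p0 \<le> 1/3" proof -
      have "4*L/N \<le> 1/3" using s3 Npos by (simp add: field_simps)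
      then show ?thesis using p0le by linarith
    qed
    have p0ge: "0 \<le> p0" unfolding p0_def using Lpos w0 Npos by simp
    have pq: "p*q \<ge> p0*(1-p0)"
    proof -
      have "(p-p0)*(1-p-p0) \<ge> 0" using lo True p0le3 unfolding p0_def[symmetric]
        by (intro mult_nonneg_nonneg) auto
      then show ?thesis unfolding qdef by (simp add: algebra_simps)
    qed
    have A: "(N-2)*p0*(1-p0) \<ge> 2*L + 2*w - 1"
    proof -
      have e1: "(N-2)*p0*(1-p0) = 2*(L+w)*(1-2/N)*(1-p0)" unfolding p0_def using Npos
        by (simp add: field_simps)
      have e2: "2*(L+w)*(1-2/N)*(1-p0) \<ge> 2*(L+w)*(1 - 2/N - p0)"
      proof -
        have "(1-2/N)*(1-p0) = 1 - 2/N - p0 + p0*(2/N)" using Npos by (simp add: field_simps)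
        moreover have "p0*(2/N) \<ge> 0" using p0ge Npos by simp
        ultimately have "(1-2/N)*(1-p0) \<ge> 1 - 2/N - p0" by linarith
        then show ?thesis using Lpos w0 by (metis mult.assoc mult_left_mono mult_nonneg_nonneg zero_le_numeral add_nonneg_nonneg less_imp_le)
      qed
      have e3: "2*(L+w)*(2/N + p0) \<le> 4*L*(2/N + 4*L/N)"
        by (rule mult_mono) (use wL w0 Lpos Npos p0le p0ge in auto)
      have e4: "4*L*(2/N + 4*L/N) = (8*L+16*L^2)/N" using Npos by (simp add: field_simps power2_eq_square)
      show ?thesis using e1 e2 e3 e4 s1 by (simp add: algebra_simps)
    qed
    have B: "(N-2)*p*q \<ge> 2*L+2*w-1"
    proof -
      have "(N-2)*(p*q) \<ge> (N-2)*(p0*(1-p0))" using pq N4 by (intro mult_left_mono) auto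
      then show ?thesis using A by (simp add: mult.assoc)
    qed
    have "N^2 * q * exp (-((N-2)*p*q)) \<le> N^2 * 1 * exp (-(2*L+2*w-1))"
    proof (rule mult_mono)
      show "N^2 * q \<le> N^2 * 1" using qdef p0 p1 by (intro mult_left_mono) auto
    qed (use B in auto)
    also have "\<dots> = (N^2 * exp (-2*L)) * exp (1 - 2*w)" by (simp flip: exp_add)
    also have "\<dots> = exp (1 - 2*w)" using eN2 by simp
    also have "\<dots> \<le> exp (1 - w)" using w0 by simp
    also have "\<dots> = exp 1 * exp (-w)" by (simp flip: exp_add)
    also have "\<dots> \<le> 3 * exp 1 * exp (-w)" by simp
    finally show ?thesis .
  next
    case False
    define q0 where "q0 = (L+K+w)/N"
    have q0le: "q0 \<le> 3*L/N" unfolding q0_def using wL KL Npos by (simp add: divide_right_mono)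
    have q0le4: "q0 \<le> 1/4" proof -
      have "3*L/N \<le> 1/4" using s3 Npos by (simp add: field_simps)
      then show ?thesis using q0le by linarith
    qed
    have q0geL: "L/N \<le> q0" unfolding q0_def using K0 w0 Npos by (simp add: divide_right_mono)
    have q0pos: "0 < q0" using q0geL Lpos Npos by (smt (verit) divide_pos_pos)
    have qle: "q \<le> 1/2" using False qdef by simp
    have qge: "q0 \<le> q" using hi q0_def by simp
    have inv: "1/q0 \<le> (N-2)/4"
    proof -
      have "1/q0 \<le> 1/(L/N)" using q0geL Lpos Npos q0pos by (intro divide_left_mono) (auto intro!: mult_pos_pos)
      also have "\<dots> = N/L" by simp
      also have "\<dots> \<le> N/8" using L8 Npos by (intro divide_left_mono) auto
      also have "\<dots> \<le> (N-2)/4" using N4 by simp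
      finally show ?thesis .
    qed
    have diff: "q*(1-q) - q0*(1-q0) \<ge> (q-q0)/4"
    proof -
      have "q*(1-q) - q0*(1-q0) = (q-q0)*(1-q-q0)" by (simp add: algebra_simps)
      moreover have "(q-q0)*(1-q-q0) \<ge> (q-q0)*(1/4)" using qge qle q0le4
        by (intro mult_left_mono) auto
      ultimately show ?thesis by simp
    qed
    have ratio: "q \<le> q0 * exp ((N-2)*(q*(1-q) - q0*(1-q0)))"
    proof -
      have "q/q0 = 1 + (q-q0)/q0" using q0pos by (simp add: field_simps)
      also have "\<dots> \<le> exp ((q-q0)/q0)" by (rule exp_ge_add_one_self)
      also have "(q-q0)/q0 = (q-q0)*(1/q0)" by simp
      also have "\<dots> \<le> (q-q0)*((N-2)/4)" using inv qge by (intro mult_left_mono) auto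
      also have "\<dots> = (N-2)*((q-q0)/4)" by simp
      also have "\<dots> \<le> (N-2)*(q*(1-q) - q0*(1-q0))" using diff N4 by (intro mult_left_mono) auto
      finally have "q/q0 \<le> exp ((N-2)*(q*(1-q) - q0*(1-q0)))" by simp
      then show ?thesis using q0pos by (simp add: field_simps)
    qed
    have C: "q * exp (-((N-2)*p*q)) \<le> q0 * exp (-((N-2)*q0*(1-q0)))"
    proof -
      have "q * exp (-((N-2)*p*q)) \<le> q0 * exp ((N-2)*(q*(1-q) - q0*(1-q0))) * exp (-((N-2)*p*q))"
        using ratio by (intro mult_right_mono) auto
      also have "\<dots> = q0 * exp (-((N-2)*q0*(1-q0)))"
        unfolding mult.assoc[of q0] by (simp add: qdef flip: exp_add; simp add: algebra_simps)
      finally show ?thesis .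
    qed
    have D: "(N-2)*q0*(1-q0) \<ge> L+K+w-1"
    proof -
      have e1: "(N-2)*q0*(1-q0) = (L+K+w)*(1-2/N)*(1-q0)" unfolding q0_def using Npos
        by (simp add: field_simps)
      have e2: "(L+K+w)*(1-2/N)*(1-q0) \<ge> (L+K+w)*(1 - 2/N - q0)"
      proof -
        have "(1-2/N)*(1-q0) = 1 - 2/N - q0 + q0*(2/N)" using Npos by (simp add: field_simps)
        moreover have "q0*(2/N) \<ge> 0" using q0pos Npos by simp
        ultimately have "(1-2/N)*(1-q0) \<ge> 1 - 2/N - q0" by linarith
        then show ?thesis using Lpos w0 K0 by (metis mult.assoc mult_left_mono add_nonneg_nonneg less_imp_le)
      qed
      have e3: "(L+K+w)*(2/N + q0) \<le> (3*L)*(2/N + 3*L/N)"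
        by (rule mult_mono) (use wL w0 KL K0 Lpos Npos q0le q0pos in auto)
      have e4: "(3*L)*(2/N + 3*L/N) = (6*L+9*L^2)/N" using Npos by (simp add: field_simps power2_eq_square)
      show ?thesis using e1 e2 e3 e4 s2 by (simp add: algebra_simps)
    qed
    have "N^2 * q * exp (-((N-2)*p*q)) = N^2 * (q * exp (-((N-2)*p*q)))" by simp
    also have "\<dots> \<le> N^2 * (q0 * exp (-((N-2)*q0*(1-q0))))" using C by (intro mult_left_mono) auto
    also have "\<dots> \<le> N^2 * (q0 * exp (-(L+K+w-1)))" using D q0pos
      by (intro mult_left_mono) auto
    also have "\<dots> = N^2 * ((L+K+w)/N) * (exp (-L) * exp (-K) * exp (1-w))"
      unfolding q0_def by (simp flip: exp_add)
    also have "\<dots> = (L+K+w)/L * exp (1 - w)"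
      using eL eK Npos Lpos by (simp add: exp_minus field_simps power2_eq_square)
    also have "\<dots> \<le> 3 * exp (1-w)"
      using KL wL Lpos by (intro mult_right_mono) (auto simp: field_simps)
    also have "\<dots> = 3 * exp 1 * exp (-w)" by (simp add: mult.assoc flip: exp_add)
    finally show ?thesis .
  qed
qed


lemma pow_exp_bound:
  fixes x :: real assumes "0 \<le> x" "x \<le> 1"
  shows "(1 - x) ^ m \<le> exp (- (real m * x))"
proof -
  have "(1 - x) ^ m \<le> exp (-x) ^ m"
    using assms exp_ge_add_one_self[of "-x"] by (intro power_mono) auto
  also have "\<dots> = exp (- (real m * x))" by (simp flip: exp_of_nat_mult)
  finally show ?thesis .
qed

theorem proposition2p10:
  fixes \<omega> :: "nat \<Rightarrow> real" and p :: "nat \<Rightarrow> real"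
  assumes "filterlim \<omega> at_top sequentially"
    and "eventually (\<lambda>n. 2 * (ln (real n) + \<omega> n) / real n \<le> p n \<and>
           p n \<le> 1 - (ln (real n) + ln (ln (real n)) + \<omega> n) / real n) sequentially"
  shows "(\<lambda>n. gnp_prob n (p n) (has_nonadj_dom_pair n)) \<longlonglongrightarrow> 0"
proof -
  define w where "w = (\<lambda>n. min (\<omega> n) (ln (real n)))"
  have lnlim: "filterlim (\<lambda>n. ln (real n)) at_top sequentially" by real_asymp
  have wlim: "filterlim w at_top sequentially"
    unfolding w_def filterlim_at_top
  proof
    fix Z
    have "eventually (\<lambda>n. Z \<le> \<omega> n) sequentially" using assms(1) by (simp add: filterlim_at_top)
    moreover have "eventually (\<lambda>n. Z \<le> ln (real n)) sequentially" using lnlim by (simp add: filterlim_at_top)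
    ultimately show "eventually (\<lambda>n. Z \<le> min (\<omega> n) (ln (real n))) sequentially"
      by eventually_elim simp
  qed
  have E1: "eventually (\<lambda>n. n \<ge> 4) sequentially" by (rule eventually_ge_at_top)
  have E2: "eventually (\<lambda>n. ln (real n) \<ge> 8) sequentially" using lnlim by (simp add: filterlim_at_top)
  have E3: "eventually (\<lambda>n. (8*ln (real n) + 16*ln (real n)^2)/real n \<le> 1) sequentially" by real_asymp
  have E4: "eventually (\<lambda>n. (6*ln (real n) + 9*ln (real n)^2)/real n \<le> 1) sequentially" by real_asymp
  have E5: "eventually (\<lambda>n. 12*ln (real n) \<le> real n) sequentially" by real_asymp
  have E6: "eventually (\<lambda>n. 0 \<le> w n) sequentially" using wlim by (simp add: filterlim_at_top)
  have evb: "eventually (\<lambda>n. 0 \<le> gnp_prob n (p n) (has_nonadj_dom_pair n) \<and> gnp_prob n (p n) (has_nonadj_dom_pair n) \<le> 3 * exp 1 * exp (- w n)) sequentially"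
    using E1 E2 E3 E4 E5 E6 assms(2)
  proof eventually_elim
    case (elim n)
    define N where "N = real n"
    define L where "L = ln N"
    define K where "K = ln L"
    have N4: "N \<ge> 4" using elim unfolding N_def by simp
    have L8: "L \<ge> 8" using elim unfolding L_def N_def by simp
    have eL: "exp L = N" unfolding L_def using N4 by simp
    have eK: "exp K = L" unfolding K_def using L8 by simp
    have K0: "0 \<le> K" unfolding K_def using L8 by simp
    have KL: "K \<le> L" unfolding K_def using L8 ln_le_minus_one[of L] by simp
    have w0: "0 \<le> w n" using elim by simp
    have wL: "w n \<le> L" unfolding w_def L_def N_def by simp
    have ww: "w n \<le> \<omega> n" unfolding w_def by simp
    have Npos: "N > 0" using N4 by simp
    have lo: "2*(L+w n)/N \<le> p n"
    proof -
      have "2*(L+w n)/N \<le> 2*(L+\<omega> n)/N" using ww Npos by (simp add: divide_right_mono)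
      then show ?thesis using elim unfolding L_def N_def by simp
    qed
    have hi: "(L+K+w n)/N \<le> 1 - p n"
    proof -
      have "(L+K+w n)/N \<le> (L+K+\<omega> n)/N" using ww Npos by (simp add: divide_right_mono)
      then show ?thesis using elim unfolding K_def L_def N_def by simp
    qed
    have p0: "0 \<le> p n"
    proof -
      have "0 \<le> 2*(L+w n)/N" using w0 L8 Npos by simp
      then show ?thesis using lo by linarith
    qed
    have p1: "p n \<le> 1"
    proof -
      have "0 \<le> (L+K+w n)/N" using w0 L8 K0 Npos by simp
      then show ?thesis using hi by linarith
    qed
    have pq1: "p n * (1 - p n) \<le> 1" using p0 p1 by (simp add: mult_le_one)
    have pq0: "0 \<le> p n * (1 - p n)" using p0 p1 by simp
    have "gnp_prob n (p n) (has_nonadj_dom_pair n) \<le> real n ^ 2 * ((1 - p n) * (1 - p n * (1 - p n)) ^ (n - 2))"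
      using p0 p1 by (rule union_bound)
    also have "\<dots> \<le> real n ^ 2 * ((1 - p n) * exp (- (real (n-2) * (p n * (1 - p n)))))"
      using pow_exp_bound[OF pq0 pq1, of "n-2"] p1 by (intro mult_left_mono) auto
    also have "\<dots> = N^2 * (1 - p n) * exp (-((N-2)*p n*(1 - p n)))"
      using N4 unfolding N_def by (simp add: of_nat_diff mult.assoc)
    also have "\<dots> \<le> 3 * exp 1 * exp (- w n)"
      by (rule partB[OF N4 L8 eL eK K0 KL w0 wL _ _ _ p0 p1 refl lo hi])
         (use elim in \<open>simp_all add: L_def N_def\<close>)
    finally have up: "gnp_prob n (p n) (has_nonadj_dom_pair n) \<le> 3 * exp 1 * exp (- w n)" .
    have "0 \<le> gnp_prob n (p n) (has_nonadj_dom_pair n)"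
      unfolding gnp_prob_def using p0 p1 by (intro sum_nonneg) simp
    then show ?case using up by simp
  qed
  have ev0: "eventually (\<lambda>n. 0 \<le> gnp_prob n (p n) (has_nonadj_dom_pair n)) sequentially"
    using evb by (rule eventually_mono) simp
  have ev: "eventually (\<lambda>n. gnp_prob n (p n) (has_nonadj_dom_pair n) \<le> 3 * exp 1 * exp (- w n)) sequentially"
    using evb by (rule eventually_mono) simp
  have m: "filterlim (\<lambda>n. - w n) at_bot sequentially"
    using wlim by (simp add: filterlim_uminus_at_bot)
  have "(\<lambda>n. exp (- w n)) \<longlonglongrightarrow> 0"
    by (rule filterlim_compose[OF exp_at_bot m])
  then have lim: "(\<lambda>n. 3 * exp 1 * exp (- w n)) \<longlonglongrightarrow> 0"
    by (simp add: tendsto_mult_right_zero)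
  show ?thesis by (rule tendsto_sandwich[OF ev0 ev tendsto_const lim])
qed
end
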